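(* Let $\alpha>2$, $\lambda_e>0$, $0<\epsilon<1$, and $K_1=\pi\lambda_e\Gamma(1+\frac{2}{\alpha})\Gamma(1-\frac{2}{\alpha})$. Consider a network of $N_L$ legitimate nodes including a source $S$ and a destination $D$, in which each link $l$ between two nodes has a length $|D_l|>0$, and let $L_{SD}$ be the set of all paths (sequences of links through distinct nodes) from $S$ to $D$; for $L\in L_{SD}$ let $|L|$ be its number of hops. Put $T=\frac{\ln\frac{1}{1-\epsilon}}{K_1}$ and, for a path $L$ with $\sum_{l\in L}|D_l|^2<T$, $$M_t(L)=\frac{\alpha}{2|L|}\log_2\left(\frac{\ln\frac{1}{1-\epsilon}}{K_1\sum_{l\in L}|D_l|^2}\right),$$ with the convention $M_t(\varnothing)=-\infty$. Consider problem $\mathbf{P1}'$: maximize $M_t(L)$ over $L\in L_{SD}$ subject to $$\lambda_e<\frac{\ln\frac{1}{1-\epsilon}}{\pi\Gamma(1+\frac{2}{\alpha})\Gamma(1-\frac{2}{\alpha})\sum_{l\in L}|D_l|^2}$$ (equivalently $\sum_{l\in L}|D_l|^2<T$). For each $v\in\{1,\dots,N_L-1\}$ let $\tilde L_v$ be a minimizer of $\sum_{l\in L}|D_l|^2$ over all $L\in L_{SD}$ with $|L|\le v$ if this minimum exists and is strictly less than $T$, and $\tilde L_v=\varnothing$ otherwise. Then $\mathbf{P1}'$ is equivalent to problem $\mathbf{P2}$: $M_t(L^* )=\max_{1\le v\le N_L-1}M_t(\tilde L_v)$; that is, the optimal value of $\mathbf{P1}'$ equals $\max_{1\le v\le N_L-1}M_t(\tilde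 L_v)$ and a maximizing $\tilde L_v$ is an optimal path $L^*$ of $\mathbf{P1}'$.
   Context: Background: $M_t(L)$ is the secrecy rate $R_s^*/|L|$ of path $L$, where $R_s^*=\frac{\alpha}{2}\log_2\big(\ln\frac{1}{1-\epsilon}/(K_1\sum_{l\in L}|D_l|^2)\big)$ is the largest confidential-information rate for which the end-to-end secrecy outage probability $1-\exp[-K_1 2^{2R_s/\alpha}\sum_{l\in L}|D_l|^2]$ does not exceed $\epsilon$; the constraint in $\mathbf{P1}'$ is the requirement $R_s^*>0$. Here $\lambda_e$ is the density of the Poisson point process of eavesdroppers and $\alpha$ the path-loss exponent. *)

theory Defs
  imports "HOL-Analysis.Analysis"
begin

definition is_path :: "'a set \<Rightarrow> ('a \<times> 'a) set \<Rightarrow> 'a \<Rightarrow> 'a \<Rightarrow> 'a list \<Rightarrow> bool" where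
  "is_path V E S D p \<longleftrightarrow> p \<noteq> [] \<and> hd p = S \<and> last p = D \<and> distinct p \<and> set p \<subseteq> V \<and>
     (\<forall>i < length p - 1. (p ! i, p ! Suc i) \<in> E)"

definition hops :: "'a list \<Rightarrow> nat" where
  "hops p = length p - 1"

definition cost :: "('a \<times> 'a \<Rightarrow> real) \<Rightarrow> 'a list \<Rightarrow> real" where
  "cost dl p = (\<Sum>i < length p - 1. (dl (p ! i, p ! Suc i))\<^sup>2)"

definition K1 :: "real \<Rightarrow> real \<Rightarrow> real" where
  "K1 \<alpha> lam_e = pi * lam_e * Gamma (1 + 2 / \<alpha>) * Gamma (1 - 2 / \<alpha>)"

text \<open>Secrecy metric M_t; None plays the role of the empty path, with value -infinity.\<close>
definition Mt :: "real \<Rightarrow> real \<Rightarrow> real \<Rightarrow> ('a \<times> 'a \<Rightarrow> real) \<Rightarrow> 'a list option \<Rightarrow> ereal" where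
  "Mt \<alpha> \<epsilon> K dl L = (case L of None \<Rightarrow> - \<infinity>
     | Some p \<Rightarrow> ereal (\<alpha> / (2 * real (hops p)) * log 2 (ln (1 / (1 - \<epsilon>)) / (K * cost dl p))))"

end

theory Submission
  imports Defs
begin


lemma path_len:
  assumes "is_path V E S D p" "S \<noteq> D" "finite V"
  shows "2 \<le> length p" "1 \<le> hops p" "hops p \<le> card V - 1"
proof -
  have ne: "p \<noteq> []" "hd p = S" "last p = D" using assms(1) unfolding is_path_def by auto
  show l2: "2 \<le> length p"
  proof (rule ccontr)
    assume "\<not> 2 \<le> length p"
    moreover have "length p \<noteq> 0" using ne(1) by simp
    ultimately have "length p = 1" by linarith
    then obtain x where "p = [x]" by (auto simp: length_Suc_conv)
    then show False using ne assms(2) by simp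
  qed
  then show "1 \<le> hops p" unfolding hops_def by simp
  have "length p = card (set p)" using assms(1) unfolding is_path_def by (simp add: distinct_card)
  also have "\<dots> \<le> card V" using assms(1,3) unfolding is_path_def by (simp add: card_mono)
  finally show "hops p \<le> card V - 1" unfolding hops_def by simp
qed

lemma cost_pos:
  assumes "is_path V E S D p" "S \<noteq> D" "finite V" "\<And>l. l \<in> E \<Longrightarrow> dl l > 0"
  shows "cost dl p > 0"
proof -
  have "2 \<le> length p" using path_len[OF assms(1-3)] by simp
  then have "0 \<in> {..<length p - 1}" by simp
  then have ne: "{..<length p - 1} \<noteq> {}" by blast
  have "\<forall>i\<in>{..<length p - 1}. (dl (p ! i, p ! Suc i))\<^sup>2 > 0"
    using assms(1,4) unfolding is_path_def by fastforce
  then show ?thesis unfolding cost_def using ne by (intro sum_pos) auto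
qed

lemma paths_finite:
  assumes "finite V"
  shows "finite {p. is_path V E S D p \<and> P p}"
proof -
  have "{p. is_path V E S D p \<and> P p} \<subseteq> {xs. set xs \<subseteq> V \<and> length xs \<le> card V}"
  proof
    fix p assume "p \<in> {p. is_path V E S D p \<and> P p}"
    then have "distinct p" "set p \<subseteq> V" unfolding is_path_def by auto
    moreover have "length p \<le> card V" using calculation assms
      by (metis card_mono distinct_card)
    ultimately show "p \<in> {xs. set xs \<subseteq> V \<and> length xs \<le> card V}" by simp
  qed
  then show ?thesis using finite_lists_length_le[OF assms] by (rule finite_subset)
qed

lemma exists_min:
  fixes f :: "'b \<Rightarrow> real"
  assumes "finite A" "x \<in> A"
  shows "\<exists>p\<in>A. \<forall>q\<in>A. f p \<le> f q"
proof -
  have "Min (f ` A) \<in> f ` A" using assms by (intro Min_in) auto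
  then obtain p where p: "p \<in> A" "f p = Min (f ` A)" by auto
  show ?thesis
  proof (intro bexI[of _ p] ballI)
    fix q assume "q \<in> A"
    then show "f p \<le> f q" using p(2) assms(1) by simp
  qed (rule p(1))
qed

lemma mono_metric:
  fixes \<alpha> L K cp cq :: real and hp hq :: nat
  assumes "\<alpha> > 0" "1 \<le> hp" "hp \<le> hq" "0 < cp" "cp \<le> cq" "cq < L / K" "K > 0"
  shows "\<alpha> / (2 * real hq) * log 2 (L / (K * cq)) \<le> \<alpha> / (2 * real hp) * log 2 (L / (K * cp))"
proof -
  have Kc: "K * cq < L" using assms(6,7) by (simp add: field_simps)
  have cq0: "0 < K * cq" using assms by simp
  have L0: "0 < L" using Kc cq0 by linarith
  have a: "0 < log 2 (L / (K * cq))" using Kc cq0 L0 assms(4,5,7)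
    by (subst zero_less_log_cancel_iff) (auto simp: field_simps)
  have cq: "0 < K * cq" using assms by simp
  have "L / (K * cq) \<le> L / (K * cp)" using assms Kc L0
    by (intro divide_left_mono) auto
  then have b: "log 2 (L / (K * cq)) \<le> log 2 (L / (K * cp))"
    using Kc cq L0 assms(4,7) by (subst log_le_cancel_iff) auto
  have c: "\<alpha> / (2 * real hq) \<le> \<alpha> / (2 * real hp)" using assms(1-3)
    by (intro divide_left_mono) auto
  show ?thesis using a b c assms(1,2,3)
    by (intro mult_mono) auto
qed

theorem theorem2:
  fixes V :: "'a set" and E :: "('a \<times> 'a) set" and S D :: 'a
    and dl :: "'a \<times> 'a \<Rightarrow> real" and \<alpha> lam_e \<epsilon> :: real
    and Lt :: "nat \<Rightarrow> 'a list option"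
  assumes "\<alpha> > 2" and "lam_e > 0" and "0 < \<epsilon>" and "\<epsilon> < 1"
    and "finite V" and "S \<in> V" and "D \<in> V" and "S \<noteq> D"
    and "E \<subseteq> V \<times> V"
    and "\<And>l. l \<in> E \<Longrightarrow> dl l > 0"
    and Lt_def: "\<And>v. v \<in> {1..card V - 1} \<Longrightarrow>
      (case Lt v of
         Some p \<Rightarrow> (is_path V E S D p \<and> hops p \<le> v \<and>
                    (\<forall>q. is_path V E S D q \<and> hops q \<le> v \<longrightarrow> cost dl p \<le> cost dl q)) \<and>
                   cost dl p < ln (1 / (1 - \<epsilon>)) / K1 \<alpha> lam_e
       | None \<Rightarrow> \<not> (\<exists>p. (is_path V E S D p \<and> hops p \<le> v \<and>
                    (\<forall>q. is_path V E S D q \<and> hops q \<le> v \<longrightarrow> cost dl p \<le> cost dl q)) \<and>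
                   cost dl p < ln (1 / (1 - \<epsilon>)) / K1 \<alpha> lam_e))"
  shows "(SUP p \<in> {p. is_path V E S D p \<and>
            lam_e < ln (1 / (1 - \<epsilon>)) / (pi * Gamma (1 + 2 / \<alpha>) * Gamma (1 - 2 / \<alpha>) * cost dl p)}.
            Mt \<alpha> \<epsilon> (K1 \<alpha> lam_e) dl (Some p))
         = (MAX v \<in> {1..card V - 1}. Mt \<alpha> \<epsilon> (K1 \<alpha> lam_e) dl (Lt v))
    \<and> (\<forall>v \<in> {1..card V - 1}. \<forall>p.
         Mt \<alpha> \<epsilon> (K1 \<alpha> lam_e) dl (Lt v) = (MAX w \<in> {1..card V - 1}. Mt \<alpha> \<epsilon> (K1 \<alpha> lam_e) dl (Lt w))
         \<and> Lt v = Some p \<longrightarrow>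
           is_path V E S D p
         \<and> lam_e < ln (1 / (1 - \<epsilon>)) / (pi * Gamma (1 + 2 / \<alpha>) * Gamma (1 - 2 / \<alpha>) * cost dl p)
         \<and> (\<forall>q. is_path V E S D q \<and>
              lam_e < ln (1 / (1 - \<epsilon>)) / (pi * Gamma (1 + 2 / \<alpha>) * Gamma (1 - 2 / \<alpha>) * cost dl q)
              \<longrightarrow> Mt \<alpha> \<epsilon> (K1 \<alpha> lam_e) dl (Some q) \<le> Mt \<alpha> \<epsilon> (K1 \<alpha> lam_e) dl (Some p)))"
proof -
  define L where "L = ln (1 / (1 - \<epsilon>))"
  define G where "G = Gamma (1 + 2 / \<alpha>) * Gamma (1 - 2 / \<alpha>)"
  define K where "K = K1 \<alpha> lam_e"
  define I where "I = {1..card V - 1}"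
  define M where "M = (\<lambda>v. Mt \<alpha> \<epsilon> (K1 \<alpha> lam_e) dl (Lt v))"
  define F where "F = {p. is_path V E S D p \<and>
            lam_e < ln (1 / (1 - \<epsilon>)) / (pi * Gamma (1 + 2 / \<alpha>) * Gamma (1 - 2 / \<alpha>) * cost dl p)}"
  have apos: "\<alpha> > 0" using assms(1) by simp
  have g1: "Gamma (1 + 2 / \<alpha>) > 0" using apos by (intro Gamma_real_pos) (simp add: add_pos_pos)
  have "2 / \<alpha> < 1" using assms(1) by simp
  then have g2: "Gamma (1 - 2 / \<alpha>) > 0" by (intro Gamma_real_pos) simp
  have Gpos: "G > 0" unfolding G_def using g1 g2 by simp
  have "1 / (1 - \<epsilon>) > 1" using assms(3,4) by simp
  then have Lpos: "L > 0" unfolding L_def by (simp add: ln_gt_zero)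
  have Keq: "K = lam_e * (pi * G)" unfolding K_def K1_def G_def by simp
  have Kpos: "K > 0" using Keq Gpos assms(2) by simp
  have feas: "lam_e < L / (pi * Gamma (1 + 2 / \<alpha>) * Gamma (1 - 2 / \<alpha>) * c) \<longleftrightarrow> c < L / K"
    if "c > 0" for c
  proof -
    have eqd: "pi * Gamma (1 + 2 / \<alpha>) * Gamma (1 - 2 / \<alpha>) * c = (pi * G) * c" unfolding G_def by (simp add: ac_simps)
    moreover have "pi * G > 0" using Gpos by simp
    moreover note PG = \<open>pi * G > 0\<close>
    have e1: "lam_e < L / ((pi * G) * c) \<longleftrightarrow> lam_e * ((pi * G) * c) < L"
      using PG that by (simp add: pos_less_divide_eq)
    have e2: "c < L / (lam_e * (pi * G)) \<longleftrightarrow> c * (lam_e * (pi * G)) < L"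
      using PG that assms(2) by (simp add: pos_less_divide_eq)
    have e3: "lam_e * ((pi * G) * c) = c * (lam_e * (pi * G))" by (simp add: ac_simps)
    show ?thesis unfolding Keq eqd using e1 e2 e3 by simp
  qed
  have F_iff: "p \<in> F \<longleftrightarrow> is_path V E S D p \<and> cost dl p < L / K" for p
  proof
    assume "p \<in> F"
    then show "is_path V E S D p \<and> cost dl p < L / K"
      using feas cost_pos[OF _ assms(8,5,10)] unfolding F_def L_def by auto
  next
    assume "is_path V E S D p \<and> cost dl p < L / K"
    then show "p \<in> F"
      using feas cost_pos[OF _ assms(8,5,10)] unfolding F_def L_def by auto
  qed
  have cardV: "2 \<le> card V"
  proof -
    have "{S, D} \<subseteq> V" using assms(6,7) by simp
    then have "card {S, D} \<le> card V" using assms(5) by (rule card_mono[rotated])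
    then show ?thesis using assms(8) by simp
  qed
  have Ifin: "finite I" unfolding I_def by simp
  have Ine: "I \<noteq> {}" unfolding I_def using cardV by auto
  have A: "p \<in> F \<and> hops p \<le> v \<and> (\<forall>q. is_path V E S D q \<and> hops q \<le> v \<longrightarrow> cost dl p \<le> cost dl q)"
    if "v \<in> I" "Lt v = Some p" for v p
    using Lt_def[of v] that unfolding I_def F_iff L_def K_def by simp
  have B: "Mt \<alpha> \<epsilon> (K1 \<alpha> lam_e) dl (Some q) \<le> M (hops q)" if qF: "q \<in> F" for q
  proof -
    define h where "h = hops q"
    have qp: "is_path V E S D q" "cost dl q < L / K" using qF F_iff by auto
    have hI: "h \<in> I" unfolding I_def h_def using path_len[OF qp(1) assms(8,5)] by simp
    obtain p0 where p0: "p0 \<in> {p. is_path V E S D p \<and> hops p \<le> h}"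
      "\<forall>q\<in>{p. is_path V E S D p \<and> hops p \<le> h}. cost dl p0 \<le> cost dl q"
      using exists_min[OF paths_finite[OF assms(5), where E=E and S=S and D=D and P="\<lambda>p. hops p \<le> h"], where x=q and f="cost dl"] qp
      unfolding h_def by auto
    have "cost dl p0 \<le> cost dl q" using p0(2) qp(1) unfolding h_def by auto
    then have p0c: "cost dl p0 < L / K" using qp(2) by simp
    have "Lt h \<noteq> None"
    proof
      assume "Lt h = None"
      then show False using Lt_def[of h] hI p0 p0c unfolding I_def L_def K_def by auto
    qed
    then obtain p where p: "Lt h = Some p" by auto
    have pA: "p \<in> F" "hops p \<le> h" "cost dl p \<le> cost dl q"
      using A[OF hI p] qp(1) unfolding h_def by auto
    have pp: "is_path V E S D p" "cost dl p < L / K" using pA(1) F_iff by auto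
    have "\<alpha> / (2 * real h) * log 2 (L / (K * cost dl q))
          \<le> \<alpha> / (2 * real (hops p)) * log 2 (L / (K * cost dl p))"
      using mono_metric[OF apos path_len(2)[OF pp(1) assms(8,5)] pA(2)
          cost_pos[OF pp(1) assms(8,5,10)] pA(3) qp(2) Kpos] .
    then show ?thesis unfolding M_def h_def p[unfolded h_def] Mt_def L_def K_def by simp
  qed
  define Mx where "Mx = Max (M ` I)"
  have le: "M v \<le> Mx" if "v \<in> I" for v unfolding Mx_def using Ifin that by simp
  have eq: "(SUP p \<in> F. Mt \<alpha> \<epsilon> (K1 \<alpha> lam_e) dl (Some p)) = Mx"
  proof (rule antisym)
    show "(SUP p \<in> F. Mt \<alpha> \<epsilon> (K1 \<alpha> lam_e) dl (Some p)) \<le> Mx"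
    proof (rule SUP_least)
      fix q assume qF: "q \<in> F"
      have "hops q \<in> I" using qF F_iff path_len[OF _ assms(8,5)] unfolding I_def by auto
      then show "Mt \<alpha> \<epsilon> (K1 \<alpha> lam_e) dl (Some q) \<le> Mx" using B[OF qF] le by (meson order_trans)
    qed
  next
    have "Mx \<in> M ` I" unfolding Mx_def using Ifin Ine by simp
    then obtain v where v: "v \<in> I" "Mx = M v" by auto
    show "Mx \<le> (SUP p \<in> F. Mt \<alpha> \<epsilon> (K1 \<alpha> lam_e) dl (Some p))"
    proof (cases "Lt v")
      case None
      then show ?thesis using v unfolding M_def Mt_def by simp
    next
      case (Some p)
      then have "p \<in> F" using A[OF v(1)] by simp
      then show ?thesis using v Some unfolding M_def by (auto intro: SUP_upper)
    qed
  qed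
  show ?thesis
  proof (intro conjI ballI allI impI)
    show "(SUP p \<in> {p. is_path V E S D p \<and>
            lam_e < ln (1 / (1 - \<epsilon>)) / (pi * Gamma (1 + 2 / \<alpha>) * Gamma (1 - 2 / \<alpha>) * cost dl p)}.
            Mt \<alpha> \<epsilon> (K1 \<alpha> lam_e) dl (Some p))
         = (MAX v \<in> {1..card V - 1}. Mt \<alpha> \<epsilon> (K1 \<alpha> lam_e) dl (Lt v))"
      using eq unfolding F_def Mx_def M_def I_def by simp
  next
    fix v p
    assume v: "v \<in> {1..card V - 1}"
      and h: "Mt \<alpha> \<epsilon> (K1 \<alpha> lam_e) dl (Lt v) = (MAX w \<in> {1..card V - 1}. Mt \<alpha> \<epsilon> (K1 \<alpha> lam_e) dl (Lt w)) \<and> Lt v = Some p"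
    have vI: "v \<in> I" using v unfolding I_def .
    have pF: "p \<in> F" using A[OF vI] h by simp
    then show "is_path V E S D p" unfolding F_def by simp
    show "lam_e < ln (1 / (1 - \<epsilon>)) / (pi * Gamma (1 + 2 / \<alpha>) * Gamma (1 - 2 / \<alpha>) * cost dl p)"
      using pF unfolding F_def by simp
      fix q assume "is_path V E S D q \<and>
              lam_e < ln (1 / (1 - \<epsilon>)) / (pi * Gamma (1 + 2 / \<alpha>) * Gamma (1 - 2 / \<alpha>) * cost dl q)"
      then have qF: "q \<in> F" unfolding F_def by simp
      have "hops q \<in> I" using qF F_iff path_len[OF _ assms(8,5)] unfolding I_def by auto
      then have "Mt \<alpha> \<epsilon> (K1 \<alpha> lam_e) dl (Some q) \<le> Mx" using B[OF qF] le by (meson order_trans)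
      also have "Mx = Mt \<alpha> \<epsilon> (K1 \<alpha> lam_e) dl (Some p)"
        using h unfolding Mx_def M_def I_def by metis
      finally show "Mt \<alpha> \<epsilon> (K1 \<alpha> lam_e) dl (Some q) \<le> Mt \<alpha> \<epsilon> (K1 \<alpha> lam_e) dl (Some p)" .
  qed
qed

end
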